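(* Let $\mathcal{X}$ be a Banach space, $\epsilon>0$, $P\in\mathcal{B}(\mathcal{X})$ a projection with $\|P\|_\infty=1$, and $[0,\epsilon]\ni t\mapsto P(t)\in\mathcal{B}(\mathcal{X})$, $[0,\epsilon]\ni t\mapsto C(t)\in\mathcal{B}(\mathcal{X})$ two maps such that, for some $v,w\ge0$ and all $t\in[0,\epsilon]$, $P(t)^2=P(t)$, $P(t)C(t)=C(t)P(t)=C(t)$, $\|P(t)-P\|_\infty\le tv$ and $\|C(t)-P(t)\|_\infty\le tw$. Then for all $n\in\mathbb{N}$ with $\frac1n\in[0,\epsilon]$, $$\Big\|C(\tfrac1n)^n-e^{n(C(\frac1n)-P(\frac1n))}P(\tfrac1n)\Big\|_\infty\le\frac n2e^{v+w}\Big\|\big(C(\tfrac1n)-P(\tfrac1n)\big)^2\Big\|_\infty\le\frac{w^2}{2n}e^{v+w}.$$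
   Context: $\mathcal{B}(\mathcal{X})$: bounded operators with operator norm $\|\cdot\|_\infty$; a projection is a bounded idempotent; exponentials of bounded operators are defined by power series. *)

theory Defs
  imports "HOL-Analysis.Analysis"
begin

definition blpow :: "('a::real_normed_vector \<Rightarrow>\<^sub>L 'a) \<Rightarrow> nat \<Rightarrow> ('a \<Rightarrow>\<^sub>L 'a)" where
  "blpow A n = ((\<lambda>B. A o\<^sub>L B) ^^ n) id_blinfun"

definition blexp :: "('a::banach \<Rightarrow>\<^sub>L 'a) \<Rightarrow> ('a \<Rightarrow>\<^sub>L 'a)" where
  "blexp A = (\<Sum>k. (1 / fact k) *\<^sub>R blpow A k)"

end

theory Submission imports Defs begin

lemma cassoc: "(A o\<^sub>L B) o\<^sub>L C = A o\<^sub>L (B o\<^sub>L C)"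
  by (rule blinfun_eqI) simp
lemma cid_l: "id_blinfun o\<^sub>L A = A" by (rule blinfun_eqI) simp
lemma cid_r: "A o\<^sub>L id_blinfun = A" by (rule blinfun_eqI) simp
lemma cadd_l: "(A + B) o\<^sub>L C = (A o\<^sub>L C) + (B o\<^sub>L C)"
  by (rule bounded_bilinear.add_left[OF bounded_bilinear_blinfun_compose])
lemma cadd_r: "C o\<^sub>L (A + B) = (C o\<^sub>L A) + (C o\<^sub>L B)"
  by (rule bounded_bilinear.add_right[OF bounded_bilinear_blinfun_compose])
lemma cscale_l: "(r *\<^sub>R A) o\<^sub>L C = r *\<^sub>R (A o\<^sub>L C)"
  by (rule bounded_bilinear.scaleR_left[OF bounded_bilinear_blinfun_compose])
lemma cscale_r: "C o\<^sub>L (r *\<^sub>R A) = r *\<^sub>R (C o\<^sub>L A)"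
  by (rule bounded_bilinear.scaleR_right[OF bounded_bilinear_blinfun_compose])
lemma csum_r: "C o\<^sub>L (\<Sum>k\<in>K. f k) = (\<Sum>k\<in>K. C o\<^sub>L f k)"
  by (rule bounded_bilinear.sum_right[OF bounded_bilinear_blinfun_compose])

lemma blpow_0[simp]: "blpow A 0 = id_blinfun" by (simp add: blpow_def)
lemma blpow_Suc: "blpow A (Suc n) = A o\<^sub>L blpow A n" by (simp add: blpow_def)
lemma blpow_Suc_right: "blpow A (Suc n) = blpow A n o\<^sub>L A"
proof (induction n)
  case 0 then show ?case by (simp add: blpow_Suc cid_l cid_r)
next
  case (Suc n)
  have "blpow A (Suc (Suc n)) = A o\<^sub>L (blpow A n o\<^sub>L A)" using Suc by (simp add: blpow_Suc)
  also have "\<dots> = blpow A (Suc n) o\<^sub>L A" by (simp add: blpow_Suc cassoc)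
  finally show ?case .
qed
lemma blpow_add: "blpow A (m + n) = blpow A m o\<^sub>L blpow A n"
  by (induction m) (simp_all add: blpow_Suc cid_l cassoc)
lemma norm_blpow: "norm (blpow A n) \<le> norm A ^ n"
proof (induction n)
  case 0 then show ?case using norm_blinfun_id_le by simp
next
  case (Suc n)
  have "norm (blpow A (Suc n)) \<le> norm A * norm (blpow A n)"
    by (simp add: blpow_Suc norm_blinfun_compose)
  also have "\<dots> \<le> norm A * norm A ^ n" using Suc by (simp add: mult_left_mono)
  finally show ?case by simp
qed
lemma blpow_scaleR: "blpow (r *\<^sub>R A) n = r^n *\<^sub>R blpow A n"
  by (induction n) (simp_all add: blpow_Suc cscale_l cscale_r)

lemma blexp_summable: "summable (\<lambda>k. (1 / fact k) *\<^sub>R blpow (A::'a::banach \<Rightarrow>\<^sub>L 'a) k)"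
proof (rule summable_comparison_test)
  show "summable (\<lambda>k. norm A ^ k /\<^sub>R fact k)" using exp_converges by (rule sums_summable)
  show "\<exists>N. \<forall>k\<ge>N. norm ((1 / fact k) *\<^sub>R blpow A k) \<le> norm A ^ k /\<^sub>R fact k"
    using norm_blpow by (auto intro!: divide_right_mono simp: divide_inverse_commute)
qed

lemma pascal:
  fixes x :: "nat \<Rightarrow> 'b::real_vector"
  shows "(\<Sum>k\<le>n. real (n choose k) *\<^sub>R (x k + x (Suc k))) = (\<Sum>k\<le>Suc n. real (Suc n choose k) *\<^sub>R x k)"
proof -
  have "(\<Sum>k\<le>Suc n. real (Suc n choose k) *\<^sub>R x k)
      = x 0 + (\<Sum>k\<le>n. real (Suc n choose Suc k) *\<^sub>R x (Suc k))"
    by (simp add: sum.atMost_Suc_shift del: sum.atMost_Suc)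
  also have "\<dots> = x 0 + (\<Sum>k\<le>n. real (n choose k) *\<^sub>R x (Suc k)) + (\<Sum>k\<le>n. real (n choose Suc k) *\<^sub>R x (Suc k))"
    by (simp add: sum.atMost_Suc_shift sum.distrib scaleR_add_left del: sum.atMost_Suc)
  also have "(\<Sum>k\<le>n. real (n choose k) *\<^sub>R x k) = x 0 + (\<Sum>k\<le>n. real (n choose Suc k) *\<^sub>R x (Suc k))"
  proof -
    have "(\<Sum>k\<le>n. real (n choose k) *\<^sub>R x k) = (\<Sum>k\<le>Suc n. real (n choose k) *\<^sub>R x k)"
      by simp
    also have "\<dots> = x 0 + (\<Sum>k\<le>n. real (n choose Suc k) *\<^sub>R x (Suc k))"
      by (simp add: sum.atMost_Suc_shift del: sum.atMost_Suc)
    finally show ?thesis .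
  qed
  ultimately show ?thesis by (simp add: sum.distrib scaleR_add_right algebra_simps)
qed


lemma prod_ind:
  fixes n k :: nat
  shows "k \<le> n \<Longrightarrow> 0 \<le> (\<Prod>i<k. real n - real i) \<and> (\<Prod>i<k. real n - real i) \<le> real n ^ k
     \<and> 2 * real n * (real n ^ k - (\<Prod>i<k. real n - real i)) \<le> real n ^ k * real k * (real k - 1)"
proof (induction k)
  case 0 then show ?case by simp
next
  case (Suc k)
  define p where "p = (\<Prod>i<k. real n - real i)"
  define q where "q = real n ^ k"
  define x where "x = real n"
  have IH: "0 \<le> p" "p \<le> q" "2 * x * (q - p) \<le> q * real k * (real k - 1)"
    using Suc by (auto simp: p_def q_def x_def)
  have kx: "real k + 1 \<le> x" using Suc.prems by (simp add: x_def)
  have P: "(\<Prod>i<Suc k. real n - real i) = p * (x - real k)" by (simp add: p_def x_def)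
  have Q: "real n ^ Suc k = q * x" by (simp add: q_def x_def)
  have q0: "0 \<le> q" using IH by linarith
  have "0 \<le> p * (x - real k)" using IH kx by simp
  moreover have "p * (x - real k) \<le> q * x"
    using mult_mono[OF IH(2), of "x - real k" x] IH kx q0 by simp
  moreover have "2 * x * (q * x - p * (x - real k)) \<le> q * x * real (Suc k) * (real (Suc k) - 1)"
  proof -
    have "2 * x * (q * x - p * (x - real k)) = x * (2 * x * (q - p)) + 2 * x * p * real k"
      by (simp add: algebra_simps)
    also have "\<dots> \<le> x * (q * real k * (real k - 1)) + 2 * x * q * real k"
      using IH kx by (intro add_mono mult_left_mono mult_right_mono) auto
    also have "\<dots> = q * x * real (Suc k) * (real (Suc k) - 1)" by (simp add: algebra_simps)
    finally show ?thesis .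
  qed
  ultimately show ?case by (simp only: P Q x_def)
qed

lemma prod_bound:
  fixes n k :: nat
  assumes "n \<ge> 1"
  shows "2 * real n * \<bar>(\<Prod>i<k. real n - real i) - real n ^ k\<bar> \<le> real n ^ k * real k * (real k - 1)"
proof (cases "k \<le> n")
  case True
  have h: "0 \<le> (\<Prod>i<k. real n - real i) \<and> (\<Prod>i<k. real n - real i) \<le> real n ^ k
     \<and> 2 * real n * (real n ^ k - (\<Prod>i<k. real n - real i)) \<le> real n ^ k * real k * (real k - 1)"
    by (rule prod_ind[OF True])
  then have "\<bar>(\<Prod>i<k. real n - real i) - real n ^ k\<bar> = real n ^ k - (\<Prod>i<k. real n - real i)"
    by linarith
  then show ?thesis using h by simp
next
  case False
  then have p0: "(\<Prod>i<k. real n - real i) = 0" by (intro prod_zero) auto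
  have "2 * real n \<le> real k * (real k - 1)"
  proof -
    have "real n + 1 \<le> real k" using False by simp
    then have "real k * (real k - 1) \<ge> (real n + 1) * real n"
      by (intro mult_mono) auto
    moreover have "real n \<le> real n * real n" using assms by simp
    ultimately show ?thesis by (simp add: algebra_simps)
  qed
  then have "real n ^ k * (2 * real n) \<le> real n ^ k * (real k * (real k - 1))"
    by (intro mult_left_mono) auto
  moreover have "\<bar>(\<Prod>i<k. real n - real i) - real n ^ k\<bar> = real n ^ k"
    unfolding p0 by simp
  ultimately show ?thesis by (simp add: algebra_simps)
qed

lemma coeff_bound:
  fixes n m :: nat
  assumes "n \<ge> 1"
  shows "\<bar>real (n choose (m+2)) - real n ^ (m+2) / fact (m+2)\<bar> \<le> real n ^ (m+1) / (2 * fact m)"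
proof -
  define P where "P = (\<Prod>i<m+2. real n - real i)"
  have ch: "real (n choose (m+2)) = P / fact (m+2)"
    by (simp add: binomial_gbinomial gbinomial_prod_rev P_def atLeast0LessThan)
  have f: "(fact (m+2) :: real) = fact m * (real m + 1) * (real m + 2)"
    by (simp add: fact_Suc algebra_simps)
  have pb: "2 * real n * \<bar>P - real n ^ (m+2)\<bar> \<le> real n ^ (m+2) * (real m + 2) * (real m + 1)"
    using prod_bound[OF assms, of "m+2"] by (simp add: P_def algebra_simps)
  have "\<bar>real (n choose (m+2)) - real n ^ (m+2) / fact (m+2)\<bar> = \<bar>P - real n ^ (m+2)\<bar> / fact (m+2)"
  proof -
    have "real (n choose (m+2)) - real n ^ (m+2) / fact (m+2) = (P - real n ^ (m+2)) / fact (m+2)"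
      by (simp only: ch diff_divide_distrib)
    then show ?thesis by simp
  qed
  also have "\<dots> \<le> real n ^ (m+1) / (2 * fact m)"
  proof -
    have np: "real n > 0" using assms by simp
    have "\<bar>P - real n ^ (m+2)\<bar> \<le> real n ^ (m+2) * (real m + 2) * (real m + 1) / (2 * real n)"
      using pb np by (simp add: field_simps)
    also have "\<dots> = real n ^ (m+1) * (real m + 2) * (real m + 1) / 2"
      using np by (simp add: field_simps)
    finally have "\<bar>P - real n ^ (m+2)\<bar> \<le> real n ^ (m+1) * (real m + 2) * (real m + 1) / 2" .
    then have "\<bar>P - real n ^ (m+2)\<bar> / fact (m+2) \<le> (real n ^ (m+1) * (real m + 2) * (real m + 1) / 2) / fact (m+2)"
      by (intro divide_right_mono) auto
    also have "\<dots> = real n ^ (m+1) / (2 * fact m)"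
    proof -
      have g: "A * (real m + 2) * (real m + 1) / 2 / (fm * (real m + 1) * (real m + 2)) = A / (2 * fm)"
        if f: "fm > 0" for A fm :: real
      proof -
        define c where "c = (real m + 1) * (real m + 2)"
        have c: "c > 0" by (simp add: c_def)
        have "A * (real m + 2) * (real m + 1) / 2 / (fm * (real m + 1) * (real m + 2)) = A * c / 2 / (fm * c)"
          by (simp add: c_def mult.assoc mult.commute)
        also have "\<dots> = A / (2 * fm)" using c f by (simp add: field_simps)
        finally show ?thesis .
      qed
      show ?thesis unfolding f by (rule g) simp
    qed
    finally show ?thesis .
  qed
  finally show ?thesis .
qed


lemma main_est:
  fixes Q D :: "'a::banach \<Rightarrow>\<^sub>L 'a" and n :: nat
  assumes QQ: "Q o\<^sub>L Q = Q" and QD: "Q o\<^sub>L D = D" and DQ: "D o\<^sub>L Q = D" and n1: "n \<ge> 1"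
  shows "norm (blpow (Q + D) n - (blexp (real n *\<^sub>R D) o\<^sub>L Q))
     \<le> real n / 2 * exp (real n * norm D) * norm (blpow D 2)"
proof -
  define y where "y k = blpow D k o\<^sub>L Q" for k
  have aQ: "blpow D (Suc k) o\<^sub>L Q = blpow D (Suc k)" for k
    by (simp add: blpow_Suc_right cassoc DQ)
  have Qy: "Q o\<^sub>L y k = y k" for k
  proof (cases k)
    case 0 then show ?thesis by (simp add: y_def cid_l QQ)
  next
    case (Suc j) then show ?thesis by (simp add: y_def blpow_Suc cassoc[symmetric] QD)
  qed
  have step: "(Q + D) o\<^sub>L y k = y k + y (Suc k)" for k
  proof -
    have "(Q + D) o\<^sub>L y k = (Q o\<^sub>L y k) + (D o\<^sub>L y k)" by (rule cadd_l)
    also have "D o\<^sub>L y k = y (Suc k)" by (simp add: y_def blpow_Suc cassoc)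
    finally show ?thesis by (simp add: Qy)
  qed
  have binom: "blpow (Q + D) n' o\<^sub>L Q = (\<Sum>k\<le>n'. real (n' choose k) *\<^sub>R y k)" for n'
  proof (induction n')
    case 0 then show ?case by (simp add: y_def)
  next
    case (Suc n')
    have "blpow (Q + D) (Suc n') o\<^sub>L Q = (Q + D) o\<^sub>L (blpow (Q + D) n' o\<^sub>L Q)"
      by (simp add: blpow_Suc cassoc)
    also have "\<dots> = (\<Sum>k\<le>n'. real (n' choose k) *\<^sub>R ((Q + D) o\<^sub>L y k))"
      by (simp add: Suc csum_r cscale_r)
    also have "\<dots> = (\<Sum>k\<le>n'. real (n' choose k) *\<^sub>R (y k + y (Suc k)))"
      by (simp add: step)
    also have "\<dots> = (\<Sum>k\<le>Suc n'. real (Suc n' choose k) *\<^sub>R y k)"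
      by (rule pascal)
    finally show ?case .
  qed
  obtain m0 where m0: "n = Suc m0" using n1 by (cases n) auto
  have pw: "blpow (Q + D) n o\<^sub>L Q = blpow (Q + D) n"
  proof -
    have "(Q + D) o\<^sub>L Q = Q + D" by (simp add: cadd_l QQ DQ)
    then show ?thesis unfolding m0 by (simp only: blpow_Suc_right cassoc)
  qed
  have F: "(\<lambda>k. real (n choose k) *\<^sub>R y k) sums blpow (Q + D) n"
  proof -
    have "(\<lambda>k. if k \<in> {..n} then real (n choose k) *\<^sub>R y k else 0) sums (\<Sum>k\<in>{..n}. real (n choose k) *\<^sub>R y k)"
      by (rule sums_If_finite_set) simp
    moreover have "(\<lambda>k. if k \<in> {..n} then real (n choose k) *\<^sub>R y k else 0) = (\<lambda>k. real (n choose k) *\<^sub>R y k)"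
      by (rule ext) simp
    ultimately show ?thesis using binom[of n] pw by simp
  qed
  have "(\<lambda>k. (1 / fact k) *\<^sub>R blpow (real n *\<^sub>R D) k) sums blexp (real n *\<^sub>R D)"
    unfolding blexp_def by (rule summable_sums[OF blexp_summable])
  then have "(\<lambda>k. ((1 / fact k) *\<^sub>R blpow (real n *\<^sub>R D) k) o\<^sub>L Q) sums (blexp (real n *\<^sub>R D) o\<^sub>L Q)"
    by (rule bounded_linear.sums[OF bounded_bilinear.bounded_linear_left[OF bounded_bilinear_blinfun_compose]])
  moreover have "(\<lambda>k. ((1 / fact k) *\<^sub>R blpow (real n *\<^sub>R D) k) o\<^sub>L Q) = (\<lambda>k. (real n ^ k / fact k) *\<^sub>R y k)"
    by (rule ext) (simp add: blpow_scaleR cscale_l y_def)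
  ultimately have E: "(\<lambda>k. (real n ^ k / fact k) *\<^sub>R y k) sums (blexp (real n *\<^sub>R D) o\<^sub>L Q)" by simp
  define c where "c k = real (n choose k) - real n ^ k / fact k" for k
  define g where "g k = c k *\<^sub>R y k" for k
  define S where "S = blpow (Q + D) n - (blexp (real n *\<^sub>R D) o\<^sub>L Q)"
  have "g = (\<lambda>k. real (n choose k) *\<^sub>R y k - (real n ^ k / fact k) *\<^sub>R y k)"
    unfolding g_def c_def by (rule ext) (rule scaleR_diff_left)
  then have "g sums S"
    unfolding S_def using sums_diff[OF F E] by (simp only:)
  moreover have "g i = 0" if "i < 2" for i
    using that by (cases i) (auto simp: g_def c_def)
  ultimately have G: "(\<lambda>m. g (m + 2)) sums S" using sums_zero_iff_shift[of 2 g S] by simp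
  define h where "h m = real n / 2 * norm (blpow D 2) * ((real n * norm D) ^ m / fact m)" for m
  have H: "h sums (real n / 2 * norm (blpow D 2) * exp (real n * norm D))"
  proof -
    have e0: "(\<lambda>m. (real n * norm D) ^ m /\<^sub>R fact m) = (\<lambda>m. (real n * norm D) ^ m / fact m)"
      by (rule ext) (simp add: divide_inverse mult.commute)
    have e: "(\<lambda>m. (real n * norm D) ^ m / fact m) sums exp (real n * norm D)"
      using exp_converges[of "real n * norm D"] unfolding e0 .
    show ?thesis unfolding h_def by (rule sums_mult[OF e])
  qed
  have gh: "norm (g (m + 2)) \<le> h m" for m
  proof -
    have "y (m + 2) = blpow D (m + 2)" using aQ[of "Suc m"] by (simp add: y_def)
    also have "\<dots> = blpow D m o\<^sub>L blpow D 2" by (rule blpow_add)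
    finally have "norm (y (m + 2)) \<le> norm (blpow D m) * norm (blpow D 2)"
      by (simp add: norm_blinfun_compose)
    also have "\<dots> \<le> norm D ^ m * norm (blpow D 2)"
      by (intro mult_right_mono norm_blpow) auto
    finally have ny: "norm (y (m + 2)) \<le> norm D ^ m * norm (blpow D 2)" .
    have nc: "\<bar>c (m + 2)\<bar> \<le> real n ^ (m + 1) / (2 * fact m)"
      unfolding c_def by (rule coeff_bound[OF n1])
    have "norm (g (m + 2)) = \<bar>c (m + 2)\<bar> * norm (y (m + 2))" by (simp add: g_def)
    also have "\<dots> \<le> real n ^ (m + 1) / (2 * fact m) * (norm D ^ m * norm (blpow D 2))"
      by (intro mult_mono nc ny) auto
    also have "\<dots> = h m" by (simp add: h_def power_mult_distrib)
    finally show ?thesis .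
  qed
  have sn: "summable (\<lambda>m. norm (g (m + 2)))"
    by (rule summable_comparison_test[OF _ sums_summable[OF H]]) (use gh in auto)
  have "norm S = norm (\<Sum>m. g (m + 2))" using G by (simp add: sums_iff)
  also have "\<dots> \<le> (\<Sum>m. norm (g (m + 2)))" by (rule summable_norm[OF sn])
  also have "\<dots> \<le> (\<Sum>m. h m)" by (rule suminf_le[OF gh sn sums_summable[OF H]])
  also have "\<dots> = real n / 2 * norm (blpow D 2) * exp (real n * norm D)" using H by (simp add: sums_iff)
  finally show ?thesis by (simp add: S_def mult_ac)
qed


lemma cdiff_l: "(A - B) o\<^sub>L C = (A o\<^sub>L C) - (B o\<^sub>L C)"
  by (rule bounded_bilinear.diff_left[OF bounded_bilinear_blinfun_compose])
lemma cdiff_r: "C o\<^sub>L (A - B) = (C o\<^sub>L A) - (C o\<^sub>L B)"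
  by (rule bounded_bilinear.diff_right[OF bounded_bilinear_blinfun_compose])

theorem lemmaC1:
  fixes \<epsilon> v w :: real
    and P :: "'a::banach \<Rightarrow>\<^sub>L 'a"
    and Pt Ct :: "real \<Rightarrow> ('a \<Rightarrow>\<^sub>L 'a)"
  assumes eps_pos: "\<epsilon> > 0"
    and P_proj: "P o\<^sub>L P = P"
    and P_norm: "norm P = 1"
    and v_nonneg: "v \<ge> 0" and w_nonneg: "w \<ge> 0"
    and Pt_proj: "\<And>t. t \<in> {0..\<epsilon>} \<Longrightarrow> Pt t o\<^sub>L Pt t = Pt t"
    and PC: "\<And>t. t \<in> {0..\<epsilon>} \<Longrightarrow> Pt t o\<^sub>L Ct t = Ct t"
    and CP: "\<And>t. t \<in> {0..\<epsilon>} \<Longrightarrow> Ct t o\<^sub>L Pt t = Ct t"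
    and Pt_close: "\<And>t. t \<in> {0..\<epsilon>} \<Longrightarrow> norm (Pt t - P) \<le> t * v"
    and Ct_close: "\<And>t. t \<in> {0..\<epsilon>} \<Longrightarrow> norm (Ct t - Pt t) \<le> t * w"
  shows "\<forall>n::nat. n \<ge> 1 \<and> 1 / real n \<in> {0..\<epsilon>} \<longrightarrow>
      norm (blpow (Ct (1 / real n)) n
            - (blexp (real n *\<^sub>R (Ct (1 / real n) - Pt (1 / real n))) o\<^sub>L Pt (1 / real n)))
        \<le> real n / 2 * exp (v + w)
            * norm (blpow (Ct (1 / real n) - Pt (1 / real n)) 2)
      \<and> real n / 2 * exp (v + w) * norm (blpow (Ct (1 / real n) - Pt (1 / real n)) 2)
        \<le> w\<^sup>2 / (2 * real n) * exp (v + w)"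
proof (intro allI impI)
  fix n :: nat
  assume a: "n \<ge> 1 \<and> 1 / real n \<in> {0..\<epsilon>}"
  then have n1: "n \<ge> 1" and tI: "1 / real n \<in> {0..\<epsilon>}" by auto
  define t where "t = 1 / real n"
  define Q where "Q = Pt t"
  define D where "D = Ct t - Pt t"
  have t: "t \<in> {0..\<epsilon>}" using tI by (simp add: t_def)
  have QQ: "Q o\<^sub>L Q = Q" using Pt_proj[OF t] by (simp add: Q_def)
  have QD: "Q o\<^sub>L D = D" using Pt_proj[OF t] PC[OF t] by (simp add: Q_def D_def cdiff_r)
  have DQ: "D o\<^sub>L Q = D" using Pt_proj[OF t] CP[OF t] by (simp add: Q_def D_def cdiff_l)
  have QDC: "Q + D = Ct t" by (simp add: Q_def D_def)
  have np: "real n > 0" using n1 by simp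
  have nD: "norm D \<le> w / real n" using Ct_close[OF t] by (simp add: D_def t_def)
  have nD': "real n * norm D \<le> w" using nD np by (simp add: field_simps)
  have ex: "exp (real n * norm D) \<le> exp (v + w)" using nD' v_nonneg by simp
  have a2: "norm (blpow D 2) \<le> norm D ^ 2" by (rule norm_blpow)
  have a2': "norm (blpow D 2) \<le> (w / real n) ^ 2"
    using a2 nD by (meson norm_ge_zero order_trans power_mono)
  have "norm (blpow (Q + D) n - (blexp (real n *\<^sub>R D) o\<^sub>L Q))
     \<le> real n / 2 * exp (real n * norm D) * norm (blpow D 2)"
    by (rule main_est[OF QQ QD DQ n1])
  also have "\<dots> \<le> real n / 2 * exp (v + w) * norm (blpow D 2)"
    using ex np by (intro mult_right_mono mult_left_mono) auto
  finally have i1: "norm (blpow (Q + D) n - (blexp (real n *\<^sub>R D) o\<^sub>L Q))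
     \<le> real n / 2 * exp (v + w) * norm (blpow D 2)" .
  have "real n / 2 * exp (v + w) * norm (blpow D 2) \<le> real n / 2 * exp (v + w) * (w / real n) ^ 2"
    using a2' np by (intro mult_left_mono) auto
  also have "\<dots> = w\<^sup>2 / (2 * real n) * exp (v + w)"
    using np by (simp add: field_simps power2_eq_square)
  finally have i2: "real n / 2 * exp (v + w) * norm (blpow D 2) \<le> w\<^sup>2 / (2 * real n) * exp (v + w)" .
  show "norm (blpow (Ct (1 / real n)) n
            - (blexp (real n *\<^sub>R (Ct (1 / real n) - Pt (1 / real n))) o\<^sub>L Pt (1 / real n)))
        \<le> real n / 2 * exp (v + w)
            * norm (blpow (Ct (1 / real n) - Pt (1 / real n)) 2)
      \<and> real n / 2 * exp (v + w) * norm (blpow (Ct (1 / real n) - Pt (1 / real n)) 2)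
        \<le> w\<^sup>2 / (2 * real n) * exp (v + w)"
    using i1 i2 unfolding QDC by (simp add: Q_def D_def t_def)
qed

end
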